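(* Let $\bm\Phi\in\mathbb{R}^{N\times N}$, and for hyperparameters $\bm\beta\in B$ let $\mathcal{O}_{\bm\beta}\in\mathbb{R}^{N\times N}$ be symmetric positive definite, with $\mathbf{K}_{\bm\beta}=\bm\Phi\mathcal{O}_{\bm\beta}\bm\Phi^\top$. Parametrize $\bm\rho=(\tilde\gamma,\bm\beta,\sigma^2)\in(0,\infty)\times B\times(0,\infty)$ with $\tilde\gamma=\gamma\sigma^2$, and set $\mathbf{S}_{\bm\rho}=\mathbf{K}_{\bm\beta}/\gamma+\sigma^2\mathbf{I}$. Let $\bar{\mathbf{Q}}\in\mathbb{R}^{N\times N}$ be symmetric positive definite. Take factorizations $\mathcal{O}_{\bm\beta}/\tilde\gamma=\mathbf{L}_{\bm\rho}\mathbf{L}_{\bm\rho}^\top$ and $\bar{\mathbf{Q}}=\mathbf{C}\mathbf{C}^\top$ with $\mathbf{L}_{\bm\rho},\mathbf{C}$ triangular with positive diagonal, and a QR factorization $$\begin{bmatrix}\bm\Phi\mathbf{L}_{\bm\rho}&\mathbf{C}\\ \mathbf{I}&\mathbf{0}\end{bmatrix}=\mathbf{Q}_{\bm\rho}\begin{bmatrix}\mathbf{R}_{1,\bm\rho}&\mathbf{R}_{2,\bm\rho}\\ \mathbf{0}&\mathbf{R}_{3,\bm\rho}\end{bmatrix},$$ with $\mathbf{Q}_{\bm\rho}$ orthogonal and $\mathbf{R}_{1,\bm\rho},\mathbf{R}_{3,\bm\rho}\in\mathbb{R}^{N\times N}$ upper triangular with positive diagonal ($\mathbf{R}_{1,\bm\rho},\mathbf{R}_{2,\bm\rho}$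 depend only on $(\tilde\gamma,\bm\beta)$). Then $\|\mathbf{C}\|_F^2-\|\mathbf{R}_{2,\bm\rho}\|_F^2>0$, and $(\tilde\gamma^*,\bm\beta^*,\sigma^{2*})$ minimizes $f(\bm\rho)=\log\det(\mathbf{S}_{\bm\rho})+\mathrm{tr}\{\mathbf{S}_{\bm\rho}^{-1}\bar{\mathbf{Q}}\}$ over $(0,\infty)\times B\times(0,\infty)$ if and only if $$(\tilde\gamma^*,\bm\beta^* )\in\arg\min_{\tilde\gamma>0,\bm\beta\in B}\Big(N\log\big(\|\mathbf{C}\|_F^2-\|\mathbf{R}_{2,\bm\rho}\|_F^2\big)+2\log\det(\mathbf{R}_{1,\bm\rho})\Big)$$ and $\sigma^{2*}=\frac1N\big(\|\mathbf{C}\|_F^2-\|\mathbf{R}_{2,\bm\rho^*}\|_F^2\big)$.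
   Context: $\|\cdot\|_F$ denotes the Frobenius norm. In the paper, $\bar{\mathbf{Q}}$ is the conditional second moment $\bar{\mathbf{Q}}^{(j)}$ of the unquantized output at the current EM iterate, and the claim gives an equivalent form of the EM M-step $\arg\min_{\bm\rho}(\log\det\mathbf{S}_{\bm\rho}+\mathrm{tr}\{\mathbf{S}_{\bm\rho}^{-1}\bar{\mathbf{Q}}^{(j)}\})$ for Empirical Bayes hyperparameter estimation. *)

theory Defs
  imports "HOL-Analysis.Analysis"
begin

definition sym_pos_def :: "real^'n^'n \<Rightarrow> bool" where
  "sym_pos_def A \<longleftrightarrow> transpose A = A \<and> (\<forall>x. x \<noteq> 0 \<longrightarrow> x \<bullet> (A *v x) > 0)"

definition lower_tri_posdiag :: "real^('n::{finite,linorder})^('n::{finite,linorder}) \<Rightarrow> bool" where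
  "lower_tri_posdiag A \<longleftrightarrow> (\<forall>i j. i < j \<longrightarrow> A$i$j = 0) \<and> (\<forall>i. A$i$i > 0)"

definition upper_tri_posdiag :: "real^('n::{finite,linorder})^('n::{finite,linorder}) \<Rightarrow> bool" where
  "upper_tri_posdiag A \<longleftrightarrow> (\<forall>i j. j < i \<longrightarrow> A$i$j = 0) \<and> (\<forall>i. A$i$i > 0)"

definition frob_norm :: "real^'n^'m \<Rightarrow> real" where
  "frob_norm A = sqrt (\<Sum>i\<in>UNIV. \<Sum>j\<in>UNIV. (A$i$j)^2)"

text \<open>2x2 block matrix [[A,B],[C,D]]; top block rows/cols indexed by Inl, bottom by Inr.\<close>
definition block2 :: "real^'n^'n \<Rightarrow> real^'n^'n \<Rightarrow> real^'n^'n \<Rightarrow> real^'n^'n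
    \<Rightarrow> real^('n + 'n)^('n + 'n)" where
  "block2 A B C D = (\<chi> i j. (case i of
       Inl i' \<Rightarrow> (case j of Inl j' \<Rightarrow> A$i'$j' | Inr j' \<Rightarrow> B$i'$j')
     | Inr i' \<Rightarrow> (case j of Inl j' \<Rightarrow> C$i'$j' | Inr j' \<Rightarrow> D$i'$j')))"

text \<open>S_rho with gamma = tgam / s2 : S = K_beta / gamma + s2 I.\<close>
definition S_rho :: "real^'n^'n \<Rightarrow> ('b \<Rightarrow> real^'n^'n) \<Rightarrow> real \<Rightarrow> 'b \<Rightarrow> real \<Rightarrow> real^'n^'n" where
  "S_rho Phi Ob tgam b s2 =
     (inverse (tgam / s2)) *\<^sub>R (Phi ** Ob b ** transpose Phi) + s2 *\<^sub>R mat 1"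

definition EM_obj :: "real^'n^'n \<Rightarrow> ('b \<Rightarrow> real^'n^'n) \<Rightarrow> real^'n^'n \<Rightarrow> real \<Rightarrow> 'b \<Rightarrow> real \<Rightarrow> real" where
  "EM_obj Phi Ob Qbar tgam b s2 =
     ln (det (S_rho Phi Ob tgam b s2)) + trace (matrix_inv (S_rho Phi Ob tgam b s2) ** Qbar)"

end

theory Submission
  imports Defs "HOL-Computational_Algebra.Polynomial"
begin


lemma sum_UNIV_plus:
  "sum f (UNIV::('a::finite+'b::finite) set) = sum (\<lambda>i. f (Inl i)) UNIV + sum (\<lambda>i. f (Inr i)) UNIV"
  using sum.Plus[of "UNIV::'a set" "UNIV::'b set" f] by (simp add: o_def)

lemma block2_mult:
  "block2 A B C D ** block2 E F G H =
   block2 (A**E + B**G) (A**F + B**H) (C**E + D**G) (C**F + D**H)"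
  unfolding vec_eq_iff
  by (auto simp: block2_def matrix_matrix_mult_def sum_UNIV_plus split: sum.splits)

lemma transpose_block2:
  "transpose (block2 A B C D) = block2 (transpose A) (transpose C) (transpose B) (transpose D)"
  unfolding vec_eq_iff
  by (auto simp: block2_def transpose_def split: sum.splits)

lemma block2_inj:
  assumes "block2 A B C D = block2 A' B' C' D'"
  shows "A = A' \<and> B = B' \<and> C = C' \<and> D = D'"
proof -
  have "\<And>i j. block2 A B C D $ i $ j = block2 A' B' C' D' $ i $ j" using assms by simp
  from this[of "Inl _" "Inl _"] this[of "Inl _" "Inr _"] this[of "Inr _" "Inl _"] this[of "Inr _" "Inr _"]
  show ?thesis by (simp add: block2_def vec_eq_iff)
qed

lemma perm_exists_lt:
  fixes p :: "'n::{finite,linorder} \<Rightarrow> 'n"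
  assumes "p permutes UNIV" "p \<noteq> id"
  shows "\<exists>i. p i < i"
proof (rule ccontr)
  assume "\<not> ?thesis"
  hence ge: "\<And>i. i \<le> p i" by (simp add: not_less)
  let ?S = "{i. p i \<noteq> i}"
  have ne: "?S \<noteq> {}" using assms(2) by auto
  define j where "j = Max ?S"
  have jS: "j \<in> ?S" unfolding j_def using ne by (intro Max_in) auto
  hence "j < p j" using ge[of j] by auto
  hence "p (p j) = p j"
  proof -
    assume a: "j < p j"
    show ?thesis
    proof (rule ccontr)
      assume "p (p j) \<noteq> p j"
      hence "p j \<le> j" unfolding j_def by (intro Max_ge) auto
      thus False using a by simp
    qed
  qed
  hence "p j = j" using permutes_inj[OF assms(1)] by (metis injD)
  thus False using jS by simp
qed

lemma det_upper:
  fixes A :: "real^('n::{finite,linorder})^('n::{finite,linorder})"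
  assumes ld: "\<And>i j. j < i \<Longrightarrow> A$i$j = 0"
  shows "det A = prod (\<lambda>i. A$i$i) (UNIV:: 'n set)"
proof -
  let ?U = "UNIV:: 'n set"
  let ?PU = "{p. p permutes ?U}"
  let ?pp = "(\<lambda>p. of_int (sign p) * prod (\<lambda>i. A$i$p i) (UNIV :: 'n set))"
  have fU: "finite ?U"
    by simp
  have id0: "{id} \<subseteq> ?PU"
    by (auto simp: permutes_id)
  have p0: "\<forall>p \<in> ?PU -{id}. ?pp p = 0"
  proof
    fix p
    assume p: "p \<in> ?PU - {id}"
    then obtain i where i: "p i < i" using perm_exists_lt by blast
    from ld[OF i] have "\<exists>i \<in> ?U. A$i$p i = 0"
      by blast
    with prod_zero[OF fU] show "?pp p = 0"
      by force
  qed
  from sum.mono_neutral_cong_left[OF finite_permutations[OF fU] id0 p0] show ?thesis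
    unfolding det_def by (simp add: sign_id)
qed

lemma det_upper_pos:
  fixes A :: "real^('n::{finite,linorder})^('n::{finite,linorder})"
  assumes "upper_tri_posdiag A" shows "det A > 0"
  using assms unfolding upper_tri_posdiag_def
  by (subst det_upper) (auto intro: prod_pos)



lemma matrix_add_rdistrib: "((A::real^'n^'m) + B) ** C = A ** C + B ** C"
  by (vector matrix_matrix_mult_def sum.distrib distrib_right)

lemma matrix_diff_rdistrib: "((A::real^'n^'m) - B) ** C = A ** C - B ** C"
  by (vector matrix_matrix_mult_def sum_subtractf left_diff_distrib)

lemma matrix_diff_ldistrib: "(C::real^'n^'m) ** (A - B) = C ** A - C ** B"
  by (vector matrix_matrix_mult_def sum_subtractf right_diff_distrib)

definition ispoly :: "(real \<Rightarrow> real) \<Rightarrow> bool" where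
  "ispoly f \<longleftrightarrow> (\<exists>p. \<forall>t. f t = poly p t)"

lemma ispoly_const: "ispoly (\<lambda>t. c)"
  unfolding ispoly_def by (rule exI[of _ "[:c:]"]) simp

lemma ispoly_id: "ispoly (\<lambda>t. t)"
  unfolding ispoly_def by (rule exI[of _ "[:0,1:]"]) simp

lemma ispoly_add: "ispoly f \<Longrightarrow> ispoly g \<Longrightarrow> ispoly (\<lambda>t. f t + g t)"
  unfolding ispoly_def by (metis poly_add)

lemma ispoly_diff: "ispoly f \<Longrightarrow> ispoly g \<Longrightarrow> ispoly (\<lambda>t. f t - g t)"
  unfolding ispoly_def by (metis poly_diff)

lemma ispoly_mult: "ispoly f \<Longrightarrow> ispoly g \<Longrightarrow> ispoly (\<lambda>t. f t * g t)"
  unfolding ispoly_def by (metis poly_mult)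

lemma ispoly_sum:
  assumes "\<And>k. k \<in> A \<Longrightarrow> ispoly (f k)"
  shows "ispoly (\<lambda>t. \<Sum>k\<in>A. f k t)"
proof -
  from assms have "\<forall>k\<in>A. \<exists>p. \<forall>t. f k t = poly p t" unfolding ispoly_def by blast
  then obtain P where P: "\<forall>k\<in>A. \<forall>t. f k t = poly (P k) t" by metis
  show ?thesis unfolding ispoly_def
    by (rule exI[of _ "sum P A"]) (simp add: poly_sum P)
qed

lemma ispoly_prod:
  assumes "\<And>k. k \<in> A \<Longrightarrow> ispoly (f k)"
  shows "ispoly (\<lambda>t. \<Prod>k\<in>A. f k t)"
proof -
  from assms have "\<forall>k\<in>A. \<exists>p. \<forall>t. f k t = poly p t" unfolding ispoly_def by blast
  then obtain P where P: "\<forall>k\<in>A. \<forall>t. f k t = poly (P k) t" by metis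
  show ?thesis unfolding ispoly_def
    by (rule exI[of _ "prod P A"]) (simp add: poly_prod P)
qed

definition pmat :: "(real \<Rightarrow> real^'n^'m) \<Rightarrow> bool" where
  "pmat M \<longleftrightarrow> (\<forall>i j. ispoly (\<lambda>t. M t $ i $ j))"

lemma pmat_const: "pmat (\<lambda>t. A)"
  unfolding pmat_def by (simp add: ispoly_const)

lemma pmat_add: "pmat M \<Longrightarrow> pmat N \<Longrightarrow> pmat (\<lambda>t. M t + N t)"
  unfolding pmat_def by (simp add: ispoly_add)

lemma pmat_mult:
  fixes M :: "real \<Rightarrow> real^'n^'m" and N :: "real \<Rightarrow> real^'p^'n"
  shows "pmat M \<Longrightarrow> pmat N \<Longrightarrow> pmat (\<lambda>t. M t ** N t)"
  unfolding pmat_def matrix_matrix_mult_def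
  by (simp add: ispoly_sum ispoly_mult)

lemma pmat_transpose: "pmat M \<Longrightarrow> pmat (\<lambda>t. transpose (M t))"
  unfolding pmat_def transpose_def by simp

lemma pmat_tI: "pmat (\<lambda>t. t *\<^sub>R (mat 1 :: real^'n^'n))"
  unfolding pmat_def mat_def
  by (auto simp: ispoly_mult ispoly_const ispoly_id)

lemma ispoly_det:
  fixes M :: "real \<Rightarrow> real^'n^'n"
  assumes "pmat M" shows "ispoly (\<lambda>t. det (M t))"
  unfolding det_def
  using assms unfolding pmat_def
  by (intro ispoly_sum ispoly_mult ispoly_const ispoly_prod) auto

lemma det_shift_nonzero:
  fixes A :: "real^'n^'n"
  shows "\<exists>t. det (A + t *\<^sub>R mat 1) \<noteq> 0"
proof -
  define K where "K = (\<Sum>i\<in>UNIV. \<Sum>j\<in>UNIV. \<bar>A$i$j\<bar>)"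
  define t where "t = K + 1"
  have inj: "x = 0" if x: "(A + t *\<^sub>R mat 1) *v x = 0" for x
  proof (rule ccontr)
    assume nz: "x \<noteq> 0"
    obtain i where imax: "\<And>j. \<bar>x$j\<bar> \<le> \<bar>x$i\<bar>"
    proof -
      have "finite ((\<lambda>j. \<bar>x$j\<bar>) ` UNIV)" by simp
      then obtain i where "\<bar>x$i\<bar> = Max ((\<lambda>j. \<bar>x$j\<bar>) ` UNIV)"
        by (metis (mono_tags, lifting) Max_in UNIV_not_empty empty_is_image imageE)
      thus ?thesis using that by (metis Max_ge \<open>finite _\<close> rangeI)
    qed
    have xi: "\<bar>x$i\<bar> > 0"
    proof -
      obtain j where "x$j \<noteq> 0" using nz by (metis vec_eq_iff zero_index)
      thus ?thesis using imax[of j] by auto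
    qed
    have tx: "(t *\<^sub>R mat 1) *v x = t *\<^sub>R x"
      by (metis scaleR_matrix_vector_assoc matrix_vector_mul_lid)
    have "A *v x + t *\<^sub>R x = 0"
      using x unfolding matrix_vector_mult_add_rdistrib tx .
    hence "(A *v x + t *\<^sub>R x) $ i = 0" by simp
    hence row: "(\<Sum>j\<in>UNIV. A$i$j * x$j) + t * x$i = 0"
      by (simp add: matrix_vector_mult_def)
    have K0: "K \<ge> 0" unfolding K_def by (intro sum_nonneg) auto
    have "t * x$i = - (\<Sum>j\<in>UNIV. A$i$j * x$j)" using row by linarith
    hence "\<bar>t * x$i\<bar> = \<bar>\<Sum>j\<in>UNIV. A$i$j * x$j\<bar>" by simp
    moreover have "\<bar>t * x$i\<bar> = t * \<bar>x$i\<bar>" using K0 unfolding t_def by (simp add: abs_mult)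
    ultimately have "t * \<bar>x$i\<bar> = \<bar>\<Sum>j\<in>UNIV. A$i$j * x$j\<bar>" by simp
    also have "\<dots> \<le> (\<Sum>j\<in>UNIV. \<bar>A$i$j\<bar> * \<bar>x$i\<bar>)"
      by (rule order_trans[OF sum_abs]) (auto intro!: sum_mono mult_left_mono simp: abs_mult imax)
    also have "\<dots> = (\<Sum>j\<in>UNIV. \<bar>A$i$j\<bar>) * \<bar>x$i\<bar>" by (simp add: sum_distrib_right)
    also have "(\<Sum>j\<in>UNIV. \<bar>A$i$j\<bar>) \<le> K"
      unfolding K_def
      by (rule member_le_sum[of i _ "\<lambda>i. \<Sum>j\<in>UNIV. \<bar>A$i$j\<bar>"]) (simp_all add: sum_nonneg)
    hence "(\<Sum>j\<in>UNIV. \<bar>A$i$j\<bar>) * \<bar>x$i\<bar> \<le> K * \<bar>x$i\<bar>"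
      using xi by (intro mult_right_mono) auto
    finally have "t * \<bar>x$i\<bar> \<le> K * \<bar>x$i\<bar>" .
    hence "K * \<bar>x$i\<bar> + \<bar>x$i\<bar> \<le> K * \<bar>x$i\<bar>" unfolding t_def by (simp add: distrib_right)
    thus False using xi by linarith
  qed
  have "inj ((*v) (A + t *\<^sub>R mat 1))"
  proof (rule injI)
    fix x y assume "(A + t *\<^sub>R mat 1) *v x = (A + t *\<^sub>R mat 1) *v y"
    hence "(A + t *\<^sub>R mat 1) *v (x - y) = 0" by (simp add: matrix_vector_mult_diff_distrib)
    from inj[OF this] show "x = y" by simp
  qed
  hence "det (A + t *\<^sub>R mat 1) \<noteq> 0"
    using det_nz_iff_inj[of "(*v) (A + t *\<^sub>R mat 1)"]
    by (simp add: matrix_of_matrix_vector_mul)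
  thus ?thesis by blast
qed

lemma sylvester_inv:
  fixes X :: "real^'n^'n"
  assumes "det X \<noteq> 0"
  shows "det (mat 1 + X ** transpose X) = det (mat 1 + transpose X ** X)"
proof -
  have "(mat 1 + X ** transpose X) ** X = X ** (mat 1 + transpose X ** X)"
    unfolding matrix_add_ldistrib matrix_add_rdistrib matrix_mul_assoc by simp
  hence "det (mat 1 + X ** transpose X) * det X = det X * det (mat 1 + transpose X ** X)"
    by (metis det_mul)
  thus ?thesis using assms by simp
qed

lemma sylvester:
  fixes A :: "real^'n^'n"
  shows "det (mat 1 + A ** transpose A) = det (mat 1 + transpose A ** A)"
proof -
  define X where "X = (\<lambda>t. A + t *\<^sub>R (mat 1 :: real^'n^'n))"
  have pX: "pmat X" unfolding X_def by (intro pmat_add pmat_const pmat_tI)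
  have "ispoly (\<lambda>t. det (X t))" by (rule ispoly_det[OF pX])
  then obtain q where q: "\<And>t. det (X t) = poly q t" unfolding ispoly_def by blast
  have "ispoly (\<lambda>t. det (mat 1 + X t ** transpose (X t)) - det (mat 1 + transpose (X t) ** X t))"
    by (intro ispoly_diff ispoly_det pmat_add pmat_const pmat_mult pmat_transpose pX)
  then obtain p where p: "\<And>t. det (mat 1 + X t ** transpose (X t)) - det (mat 1 + transpose (X t) ** X t) = poly p t"
    unfolding ispoly_def by blast
  have q0: "q \<noteq> 0" using det_shift_nonzero[of A] q unfolding X_def by (metis poly_0)
  have "p = 0"
  proof (rule ccontr)
    assume "p \<noteq> 0"
    have "UNIV \<subseteq> {t. poly q t = 0} \<union> {t. poly p t = 0}"
    proof
      fix t :: real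
      show "t \<in> {t. poly q t = 0} \<union> {t. poly p t = 0}"
      proof (cases "poly q t = 0")
        case False
        hence "det (X t) \<noteq> 0" using q by simp
        hence "poly p t = 0" using sylvester_inv[of "X t"] p[of t] by simp
        thus ?thesis by simp
      qed simp
    qed
    moreover have "finite ({t. poly q t = 0} \<union> {t. poly p t = 0})"
      using poly_roots_finite q0 \<open>p \<noteq> 0\<close> by blast
    ultimately have "finite (UNIV :: real set)" by (rule finite_subset)
    thus False by (simp add: infinite_UNIV_char_0)
  qed
  hence "det (mat 1 + X 0 ** transpose (X 0)) - det (mat 1 + transpose (X 0) ** X 0) = 0"
    using p[of 0] by simp
  thus ?thesis unfolding X_def by simp
qed



lemma transpose_zero': "transpose (0::real^'n^'m) = 0"
  by (simp add: transpose_def vec_eq_iff)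

lemma qr_blocks:
  fixes A C R1 R2 R3 :: "real^'n^'n" and Q :: "real^('n+'n)^('n+'n)"
  assumes "block2 A C (mat 1) 0 = Q ** block2 R1 R2 0 R3" "orthogonal_matrix Q"
  shows "transpose A ** A + mat 1 = transpose R1 ** R1"
    and "transpose A ** C = transpose R1 ** R2"
    and "transpose C ** C = transpose R2 ** R2 + transpose R3 ** R3"
proof -
  let ?M = "block2 A C (mat 1) 0" and ?R = "block2 R1 R2 0 R3"
  have "transpose ?M ** ?M = transpose ?R ** (transpose Q ** Q) ** ?R"
    unfolding assms(1) matrix_transpose_mul matrix_mul_assoc ..
  also have "\<dots> = transpose ?R ** ?R" using assms(2) unfolding orthogonal_matrix_def by simp
  finally have "transpose ?M ** ?M = transpose ?R ** ?R" .
  hence "block2 (transpose A ** A + mat 1) (transpose A ** C) (transpose C ** A) (transpose C ** C)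
       = block2 (transpose R1 ** R1) (transpose R1 ** R2) (transpose R2 ** R1) (transpose R2 ** R2 + transpose R3 ** R3)"
    unfolding transpose_block2 block2_mult by (simp add: transpose_zero')
  from block2_inj[OF this] show "transpose A ** A + mat 1 = transpose R1 ** R1"
    and "transpose A ** C = transpose R1 ** R2"
    and "transpose C ** C = transpose R2 ** R2 + transpose R3 ** R3" by auto
qed

lemma frob_sq: "(frob_norm (A::real^'n^'m))^2 = trace (transpose A ** A)"
proof -
  have "(frob_norm A)^2 = (\<Sum>i\<in>UNIV. \<Sum>j\<in>UNIV. (A$i$j)^2)"
    unfolding frob_norm_def by (simp add: sum_nonneg)
  also have "\<dots> = (\<Sum>j\<in>UNIV. \<Sum>i\<in>UNIV. (A$i$j)^2)" by (rule sum.swap)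
  also have "\<dots> = trace (transpose A ** A)"
    by (simp add: trace_def matrix_matrix_mult_def transpose_def power2_eq_square)
  finally show ?thesis .
qed

lemma frob_pos:
  fixes R :: "real^('n::{finite,linorder})^('n::{finite,linorder})"
  assumes "upper_tri_posdiag R" shows "(frob_norm R)^2 > 0"
proof -
  obtain i :: 'n where True by simp
  have "0 < (\<Sum>i\<in>UNIV. \<Sum>j\<in>UNIV. (R$i$j)^2)"
  proof (rule sum_pos2[of UNIV i])
    have "R$i$i > 0" using assms unfolding upper_tri_posdiag_def by blast
    thus "0 < (\<Sum>j\<in>UNIV. (R$i$j)^2)"
      by (intro sum_pos2[of UNIV i]) auto
  qed (auto intro: sum_nonneg)
  thus ?thesis unfolding frob_norm_def by (simp add: sum_nonneg)
qed

lemma minv_unique: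
  fixes A X :: "real^'n^'n"
  assumes "A ** X = mat 1" shows "matrix_inv A = X"
proof -
  have XA: "X ** A = mat 1" using assms matrix_left_right_inverse by blast
  hence ex: "\<exists>A'. A ** A' = mat 1 \<and> A' ** A = mat 1" using assms by blast
  have "A ** matrix_inv A = mat 1 \<and> matrix_inv A ** A = mat 1"
    unfolding matrix_inv_def by (rule someI_ex[OF ex])
  hence "matrix_inv A ** A = mat 1" by blast
  hence "matrix_inv A = matrix_inv A ** (A ** X)" using assms by simp
  also have "\<dots> = X" by (simp add: matrix_mul_assoc \<open>matrix_inv A ** A = mat 1\<close>)
  finally show ?thesis .
qed

lemma minv_inv:
  fixes A :: "real^'n^'n"
  assumes "det A \<noteq> 0" shows "A ** matrix_inv A = mat 1 \<and> matrix_inv A ** A = mat 1"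
proof -
  have "invertible A" using assms invertible_det_nz by blast
  thus ?thesis unfolding invertible_def matrix_inv_def by (rule someI_ex)
qed

lemma scaleR_mat_mult: "(s::real) *\<^sub>R (W::real^'n^'m) = mat s ** W"
  by (simp add: vec_eq_iff matrix_matrix_mult_def mat_def if_distrib if_distribR cong: if_cong)

lemma det_scaleR': "det ((s::real) *\<^sub>R (W::real^'n^'n)) = s ^ CARD('n) * det W"
proof -
  have "det (mat s :: real^'n^'n) = s ^ CARD('n)"
    using det_matrix_scaleR[of s] unfolding matrix_scaleR by simp
  thus ?thesis unfolding scaleR_mat_mult det_mul by simp
qed

lemma phi_min:
  fixes N r s :: real
  assumes "N > 0" "r > 0" "s > 0"
  shows "N * ln (r / N) + N \<le> N * ln s + r / s"
    and "N * ln s + r / s = N * ln (r / N) + N \<Longrightarrow> s = r / N"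
proof -
  define u where "u = r / (N * s)"
  have u: "u > 0" unfolding u_def using assms by simp
  have lnu: "ln u = ln (r / N) - ln s" unfolding u_def using assms
    by (simp add: ln_div ln_mult)
  have ru: "r / s = N * u" unfolding u_def using assms by (simp add: field_simps)
  have diff: "N * ln s + r / s - (N * ln (r / N) + N) = N * (u - 1 - ln u)"
    unfolding ru lnu by (simp add: algebra_simps)
  have "u - 1 - ln u \<ge> 0" using ln_le_minus_one[OF u] by simp
  hence "N * (u - 1 - ln u) \<ge> 0" using assms by simp
  thus "N * ln (r / N) + N \<le> N * ln s + r / s" using diff by simp
  assume "N * ln s + r / s = N * ln (r / N) + N"
  hence "N * (u - 1 - ln u) = 0" using diff by simp
  hence "ln u = u - 1" using assms by simp
  hence "u = 1" using ln_eq_minus_one[OF u] by simp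
  thus "s = r / N" unfolding u_def using assms by (simp add: field_simps)
qed



lemma trace_scaleR: "trace ((c::real) *\<^sub>R (X::real^'n^'n)) = c * trace X"
  by (simp add: trace_def sum_distrib_left)

lemma transpose_add': "transpose ((X::real^'n^'m) + Y) = transpose X + transpose Y"
  by (simp add: transpose_def vec_eq_iff)

lemma key:
  fixes Phi L C R1 R2 R3 :: "real^('n::{finite,linorder})^('n::{finite,linorder})"
    and Ob :: "'b \<Rightarrow> real^('n::{finite,linorder})^('n::{finite,linorder})"
    and Q :: "real^('n+'n)^('n+'n)"
  assumes g: "g > 0" and s: "s > 0"
    and Lf: "inverse g *\<^sub>R Ob b = L ** transpose L"
    and QR: "block2 (Phi ** L) C (mat 1) 0 = Q ** block2 R1 R2 0 R3" "orthogonal_matrix Q"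
    and u1: "upper_tri_posdiag R1" and u3: "upper_tri_posdiag R3"
  shows "(frob_norm C)^2 - (frob_norm R2)^2 > 0"
    and "EM_obj Phi Ob (C ** transpose C) g b s
         = real CARD('n) * ln s + 2 * ln (det R1) + ((frob_norm C)^2 - (frob_norm R2)^2) / s"
proof -
  define A where "A = Phi ** L"
  have b1: "transpose A ** A + mat 1 = transpose R1 ** R1"
    and b2: "transpose A ** C = transpose R1 ** R2"
    and b3: "transpose C ** C = transpose R2 ** R2 + transpose R3 ** R3"
    using qr_blocks[OF QR[folded A_def]] by auto
  have rR3: "(frob_norm C)^2 - (frob_norm R2)^2 = (frob_norm R3)^2"
    unfolding frob_sq b3 trace_add by simp
  thus "(frob_norm C)^2 - (frob_norm R2)^2 > 0" using frob_pos[OF u3] by simp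
  define W where "W = mat 1 + A ** transpose A"
  have Sform: "S_rho Phi Ob g b s = s *\<^sub>R W"
  proof -
    have "inverse g *\<^sub>R (Phi ** Ob b ** transpose Phi) = Phi ** (inverse g *\<^sub>R Ob b) ** transpose Phi"
      by (simp add: scalar_matrix_assoc matrix_scalar_ac)
    also have "\<dots> = A ** transpose A"
      unfolding Lf A_def matrix_transpose_mul by (simp add: matrix_mul_assoc)
    finally have e: "inverse g *\<^sub>R (Phi ** Ob b ** transpose Phi) = A ** transpose A" .
    have "inverse (g / s) = s * inverse g" using s g by (simp add: field_simps)
    hence "S_rho Phi Ob g b s = s *\<^sub>R (inverse g *\<^sub>R (Phi ** Ob b ** transpose Phi)) + s *\<^sub>R mat 1"
      unfolding S_rho_def by simp
    thus ?thesis unfolding e W_def by (simp add: scaleR_add_right add.commute)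
  qed
  have dR1: "det R1 > 0" by (rule det_upper_pos[OF u1])
  have detS: "det (S_rho Phi Ob g b s) = s ^ CARD('n) * (det R1 * det R1)"
  proof -
    have "det W = det (mat 1 + transpose A ** A)" unfolding W_def by (rule sylvester)
    also have "\<dots> = det (transpose R1 ** R1)" using b1 by (simp add: add.commute)
    also have "\<dots> = det R1 * det R1" by (simp add: det_mul)
    finally show ?thesis unfolding Sform det_scaleR' by simp
  qed
  have lndet: "ln (det (S_rho Phi Ob g b s)) = real CARD('n) * ln s + 2 * ln (det R1)"
    unfolding detS using s dR1 by (simp add: ln_mult ln_realpow)
  define Ri where "Ri = matrix_inv R1"
  have RRi: "R1 ** Ri = mat 1" and RiR: "Ri ** R1 = mat 1"
    using minv_inv[of R1] dR1 unfolding Ri_def by auto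
  define V where "V = mat 1 - A ** (Ri ** transpose Ri) ** transpose A"
  have WA: "W ** A = A ** (transpose R1 ** R1)"
  proof -
    have "W ** A = A + A ** (transpose A ** A)"
      unfolding W_def matrix_add_rdistrib by (simp add: matrix_mul_assoc)
    also have "\<dots> = A ** (transpose A ** A + mat 1)"
      by (simp add: matrix_add_ldistrib add.commute)
    finally show ?thesis unfolding b1 .
  qed
  have WV: "W ** V = mat 1"
  proof -
    have "W ** (A ** (Ri ** transpose Ri) ** transpose A)
          = A ** transpose R1 ** (R1 ** Ri) ** transpose Ri ** transpose A"
      by (simp add: matrix_mul_assoc WA)
    also have "\<dots> = A ** (transpose (Ri ** R1)) ** transpose A"
      unfolding RRi matrix_transpose_mul by (simp add: matrix_mul_assoc)
    also have "\<dots> = A ** transpose A" unfolding RiR by simp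
    finally have "W ** (A ** (Ri ** transpose Ri) ** transpose A) = A ** transpose A" .
    thus ?thesis unfolding V_def matrix_diff_ldistrib by (simp add: W_def)
  qed
  have Sinv: "matrix_inv (S_rho Phi Ob g b s) = inverse s *\<^sub>R V"
  proof (rule minv_unique)
    have "(s *\<^sub>R W) ** (inverse s *\<^sub>R V) = (s * inverse s) *\<^sub>R (W ** V)"
      by (simp add: scalar_matrix_assoc[symmetric] matrix_scalar_ac)
    thus "S_rho Phi Ob g b s ** (inverse s *\<^sub>R V) = mat 1"
      unfolding Sform WV using s by simp
  qed
  have tr2: "trace (A ** (Ri ** transpose Ri) ** transpose A ** (C ** transpose C)) = (frob_norm R2)^2"
  proof -
    have "trace (A ** (Ri ** transpose Ri) ** transpose A ** (C ** transpose C))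
        = trace ((A ** (Ri ** transpose Ri) ** transpose A ** C) ** transpose C)"
      by (simp add: matrix_mul_assoc)
    also have "\<dots> = trace (transpose C ** (A ** (Ri ** transpose Ri) ** transpose A ** C))"
      by (rule trace_mul_sym)
    also have "transpose C ** (A ** (Ri ** transpose Ri) ** transpose A ** C)
        = (transpose C ** A) ** Ri ** (transpose Ri ** (transpose A ** C))"
      by (simp add: matrix_mul_assoc)
    also have "transpose C ** A = transpose R2 ** R1"
      using arg_cong[OF b2, of transpose] by (simp add: matrix_transpose_mul)
    also have "transpose Ri ** (transpose A ** C) = R2"
      unfolding b2 matrix_mul_assoc matrix_transpose_mul[symmetric] RRi by simp
    also have "transpose R2 ** R1 ** Ri ** R2 = transpose R2 ** R2"
      by (simp add: matrix_mul_assoc[symmetric] RRi)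
    finally show ?thesis by (simp add: frob_sq)
  qed
  have trS: "trace (matrix_inv (S_rho Phi Ob g b s) ** (C ** transpose C))
        = ((frob_norm C)^2 - (frob_norm R2)^2) / s"
  proof -
    have "trace (matrix_inv (S_rho Phi Ob g b s) ** (C ** transpose C))
       = inverse s * trace (V ** (C ** transpose C))"
      unfolding Sinv by (simp add: scalar_matrix_assoc[symmetric] trace_scaleR)
    also have "trace (V ** (C ** transpose C))
        = trace (C ** transpose C) - trace (A ** (Ri ** transpose Ri) ** transpose A ** (C ** transpose C))"
      unfolding V_def matrix_diff_rdistrib trace_sub by simp
    also have "trace (C ** transpose C) = (frob_norm C)^2"
      unfolding frob_sq by (rule trace_mul_sym)
    finally have "trace (matrix_inv (S_rho Phi Ob g b s) ** (C ** transpose C))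
       = inverse s * ((frob_norm C)^2 - (frob_norm R2)^2)" unfolding tr2 .
    thus ?thesis by (simp add: field_simps)
  qed
  show "EM_obj Phi Ob (C ** transpose C) g b s
         = real CARD('n) * ln s + 2 * ln (det R1) + ((frob_norm C)^2 - (frob_norm R2)^2) / s"
    unfolding EM_obj_def lndet trS ..
qed



theorem theorem3:
  fixes Phi :: "real^('n::{finite,linorder})^('n::{finite,linorder})"
    and B :: "'b set"
    and Ob :: "'b \<Rightarrow> real^('n::{finite,linorder})^('n::{finite,linorder})"
    and Qbar C :: "real^('n::{finite,linorder})^('n::{finite,linorder})"
    and L R1 R2 R3 :: "real \<Rightarrow> 'b \<Rightarrow> real^('n::{finite,linorder})^('n::{finite,linorder})"
    and Q :: "real \<Rightarrow> 'b \<Rightarrow> real^(('n::{finite,linorder}) + ('n::{finite,linorder}))^(('n::{finite,linorder}) + ('n::{finite,linorder}))"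
    and tg0 s0 :: real and b0 :: 'b
  assumes Ob_pd: "\<And>b. b \<in> B \<Longrightarrow> sym_pos_def (Ob b)"
    and Qbar_pd: "sym_pos_def Qbar"
    and C_fac: "Qbar = C ** transpose C" "lower_tri_posdiag C"
    and L_fac: "\<And>g b. g > 0 \<Longrightarrow> b \<in> B \<Longrightarrow>
                  inverse g *\<^sub>R Ob b = L g b ** transpose (L g b) \<and> lower_tri_posdiag (L g b)"
    and QR: "\<And>g b. g > 0 \<Longrightarrow> b \<in> B \<Longrightarrow>
               block2 (Phi ** L g b) C (mat 1) 0 = Q g b ** block2 (R1 g b) (R2 g b) 0 (R3 g b)
               \<and> orthogonal_matrix (Q g b)
               \<and> upper_tri_posdiag (R1 g b) \<and> upper_tri_posdiag (R3 g b)"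
  shows "(\<forall>g b. g > 0 \<longrightarrow> b \<in> B \<longrightarrow> (frob_norm C)^2 - (frob_norm (R2 g b))^2 > 0)
    \<and> ((tg0 > 0 \<and> b0 \<in> B \<and> s0 > 0 \<and>
         (\<forall>g b s. g > 0 \<longrightarrow> b \<in> B \<longrightarrow> s > 0 \<longrightarrow>
            EM_obj Phi Ob Qbar tg0 b0 s0 \<le> EM_obj Phi Ob Qbar g b s))
       \<longleftrightarrow>
        (tg0 > 0 \<and> b0 \<in> B \<and>
         (\<forall>g b. g > 0 \<longrightarrow> b \<in> B \<longrightarrow>
            real CARD('n) * ln ((frob_norm C)^2 - (frob_norm (R2 tg0 b0))^2) + 2 * ln (det (R1 tg0 b0))
            \<le> real CARD('n) * ln ((frob_norm C)^2 - (frob_norm (R2 g b))^2) + 2 * ln (det (R1 g b)))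
         \<and> s0 = ((frob_norm C)^2 - (frob_norm (R2 tg0 b0))^2) / real CARD('n)))"
proof -
  define N where "N = real CARD('n)"
  have N: "N > 0" unfolding N_def by simp
  define r where "r = (\<lambda>g b. (frob_norm C)^2 - (frob_norm (R2 g b))^2)"
  define h where "h = (\<lambda>g b. N * ln (r g b) + 2 * ln (det (R1 g b)))"
  define F where "F = (\<lambda>g b s. EM_obj Phi Ob Qbar g b s)"
  have rpos: "r g b > 0" if "g > 0" "b \<in> B" for g b
    using key(1)[of g 1 Ob b "L g b" Phi C "Q g b" "R1 g b" "R2 g b" "R3 g b"]
      L_fac[OF that] QR[OF that] that unfolding r_def by auto
  have Feq: "F g b s = N * ln s + 2 * ln (det (R1 g b)) + r g b / s"
    if "g > 0" "b \<in> B" "s > 0" for g b s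
    using key(2)[of g s Ob b "L g b" Phi C "Q g b" "R1 g b" "R2 g b" "R3 g b"]
      L_fac[OF that(1,2)] QR[OF that(1,2)] that C_fac(1)
    unfolding r_def F_def N_def by blast
  have lower: "h g b - N * ln N + N \<le> F g b s" if "g > 0" "b \<in> B" "s > 0" for g b s
  proof -
    have "N * ln (r g b / N) + N \<le> N * ln s + r g b / s"
      by (rule phi_min(1)[OF N rpos[OF that(1,2)] that(3)])
    moreover have "N * ln (r g b / N) = N * ln (r g b) - N * ln N" using rpos[OF that(1,2)] N by (simp add: ln_div right_diff_distrib)
    ultimately show ?thesis unfolding Feq[OF that] h_def by (simp add: algebra_simps)
  qed
  have attain: "F g b (r g b / N) = h g b - N * ln N + N" if "g > 0" "b \<in> B" for g b
  proof -
    have rp: "r g b / N > 0" using rpos[OF that] N by simp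
    have "N * ln (r g b / N) = N * ln (r g b) - N * ln N" using rpos[OF that] N by (simp add: ln_div right_diff_distrib)
    moreover have "r g b / (r g b / N) = N" using rpos[OF that] N by simp
    ultimately show ?thesis unfolding Feq[OF that rp] h_def by (simp add: algebra_simps)
  qed
  have uniq: "s = r g b / N" if "g > 0" "b \<in> B" "s > 0" "F g b s \<le> h g b - N * ln N + N" for g b s
  proof -
    have "N * ln (r g b / N) + N \<le> N * ln s + r g b / s"
      by (rule phi_min(1)[OF N rpos[OF that(1,2)] that(3)])
    moreover have "N * ln (r g b / N) = N * ln (r g b) - N * ln N" using rpos[OF that(1,2)] N by (simp add: ln_div right_diff_distrib)
    ultimately have "N * ln s + r g b / s = N * ln (r g b / N) + N"
      using that(4) unfolding Feq[OF that(1-3)] h_def by (simp add: algebra_simps)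
    thus ?thesis by (rule phi_min(2)[OF N rpos[OF that(1,2)] that(3)])
  qed
  have part1: "\<forall>g b. g > 0 \<longrightarrow> b \<in> B \<longrightarrow> (frob_norm C)^2 - (frob_norm (R2 g b))^2 > 0"
    using rpos unfolding r_def by blast
  have part2: "(tg0 > 0 \<and> b0 \<in> B \<and> s0 > 0 \<and> (\<forall>g b s. g > 0 \<longrightarrow> b \<in> B \<longrightarrow> s > 0 \<longrightarrow> F tg0 b0 s0 \<le> F g b s))
     \<longleftrightarrow> (tg0 > 0 \<and> b0 \<in> B \<and> (\<forall>g b. g > 0 \<longrightarrow> b \<in> B \<longrightarrow> h tg0 b0 \<le> h g b) \<and> s0 = r tg0 b0 / N)"
  proof
    assume a: "tg0 > 0 \<and> b0 \<in> B \<and> s0 > 0 \<and> (\<forall>g b s. g > 0 \<longrightarrow> b \<in> B \<longrightarrow> s > 0 \<longrightarrow> F tg0 b0 s0 \<le> F g b s)"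
    hence t0: "tg0 > 0" "b0 \<in> B" "s0 > 0" by auto
    have hle: "h tg0 b0 \<le> h g b" if "g > 0" "b \<in> B" for g b
    proof -
      have "r g b / N > 0" using rpos[OF that] N by simp
      hence "F tg0 b0 s0 \<le> F g b (r g b / N)" using a that by blast
      thus ?thesis using lower[OF t0] attain[OF that] by simp
    qed
    have "F tg0 b0 s0 \<le> F tg0 b0 (r tg0 b0 / N)"
      using a rpos[OF t0(1,2)] N by simp
    hence "s0 = r tg0 b0 / N" using uniq[OF t0] attain[OF t0(1,2)] by simp
    thus "tg0 > 0 \<and> b0 \<in> B \<and> (\<forall>g b. g > 0 \<longrightarrow> b \<in> B \<longrightarrow> h tg0 b0 \<le> h g b) \<and> s0 = r tg0 b0 / N"
      using t0 hle by blast
  next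
    assume a: "tg0 > 0 \<and> b0 \<in> B \<and> (\<forall>g b. g > 0 \<longrightarrow> b \<in> B \<longrightarrow> h tg0 b0 \<le> h g b) \<and> s0 = r tg0 b0 / N"
    hence t0: "tg0 > 0" "b0 \<in> B" and s0: "s0 = r tg0 b0 / N" by auto
    have s0p: "s0 > 0" using s0 rpos[OF t0] N by simp
    have "F tg0 b0 s0 \<le> F g b s" if "g > 0" "b \<in> B" "s > 0" for g b s
      using attain[OF t0] s0 lower[OF that] a that by force
    thus "tg0 > 0 \<and> b0 \<in> B \<and> s0 > 0 \<and> (\<forall>g b s. g > 0 \<longrightarrow> b \<in> B \<longrightarrow> s > 0 \<longrightarrow> F tg0 b0 s0 \<le> F g b s)"
      using t0 s0p by blast
  qed
  show ?thesis using part1 part2 unfolding F_def h_def r_def N_def by simp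
qed


end
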